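(* Let $K$ be a field, let $\mathcal{H}$ be a complete $s$-uniform $t$-partite hypergraph with $2\leq s\leq t$ on vertex set $\{x_1,\ldots,x_n\}$, $R=K[x_1,\ldots,x_n]$, with sides $V_1,\ldots,V_t$ satisfying $|V_1|\leq|V_2|\leq\cdots\leq|V_t|$. Then: (a) the facets of $\mathrm{Ind}(\mathcal{H})$ are exactly the sets $\bigcup_{j=1}^{s-1}V_{i_j}$ for $1\leq i_1<\cdots<i_{s-1}\leq t$; (b) $\mathrm{Tr}(\mathcal{H})=\{\bigcup_{j=1}^{t-s+1}V_{i_j}: 1\leq i_1<\cdots<i_{t-s+1}\leq t\}$; (c) $i(\mathcal{H})=\sum_{i=t-s+2}^{t}|V_i|$ and $\tau(\mathcal{H})=\sum_{i=1}^{t-s+1}|V_i|$; (d) $\dim(R/I(\mathcal{H}))=\dim(\mathrm{Ind}(\mathcal{H}))+1=\sum_{i=t-s+2}^{t}|V_i|$ and $\mathrm{ht}(I(\mathcal{H}))=\sum_{i=1}^{t-s+1}|V_i|$; (e) if $\mathcal{H}$ is $m$-balanced for some $m\geq 1$, then $\mathrm{ht}(I(\mathcal{H}))=m(t-s+1)$ and $\dim(R/I(\mathcal{H}))=m(s-1)$.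
   Context: A complete $s$-uniform $t$-partite hypergraph has vertex set partitioned into nonempty sides $V_1,\ldots,V_t$, and its edges are exactly all $s$-element vertex subsets consisting of one vertex from each of $s$ distinct sides; it is $m$-balanced if $|V_i|=m$ for all $i$. The edge ideal is $I(\mathcal{H})=(\prod_{x\in e}x: e\in\mathcal{H})$. An independent set is a vertex set containing no edge; $\mathrm{Ind}(\mathcal{H})$ is the simplicial complex of independent sets, and $i(\mathcal{H})$ is the maximum size of an independent set. A transversal is a vertex set meeting every edge; $\mathrm{Tr}(\mathcal{H})$ is the set of inclusion-minimal transversals, and $\tau(\mathcal{H})$ is the minimum size of a transversal. *)

theory Defs
  imports Main "HOL-Library.Poly_Mapping" "HOL-Library.Extended_Nat"
begin

definition independent_set :: "'a set set \<Rightarrow> 'a set \<Rightarrow> 'a set \<Rightarrow> bool" where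
  "independent_set H X S \<longleftrightarrow> S \<subseteq> X \<and> (\<forall>e\<in>H. \<not> e \<subseteq> S)"

definition Ind :: "'a set set \<Rightarrow> 'a set \<Rightarrow> 'a set set" where
  "Ind H X = {S. independent_set H X S}"

definition facets :: "'a set set \<Rightarrow> 'a set set" where
  "facets D = {F \<in> D. \<forall>G\<in>D. F \<subseteq> G \<longrightarrow> G = F}"

definition complex_dim :: "'a set set \<Rightarrow> int" where
  "complex_dim D = int (Max (card ` D)) - 1"

definition transversal :: "'a set set \<Rightarrow> 'a set \<Rightarrow> 'a set \<Rightarrow> bool" where
  "transversal H X T \<longleftrightarrow> T \<subseteq> X \<and> (\<forall>e\<in>H. T \<inter> e \<noteq> {})"

definition Tr :: "'a set set \<Rightarrow> 'a set \<Rightarrow> 'a set set" where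
  "Tr H X = {T. transversal H X T \<and> (\<forall>T'. transversal H X T' \<and> T' \<subseteq> T \<longrightarrow> T' = T)}"

definition indep_number :: "'a set set \<Rightarrow> 'a set \<Rightarrow> nat" where
  "indep_number H X = Max {card S | S. independent_set H X S}"

definition transversal_number :: "'a set set \<Rightarrow> 'a set \<Rightarrow> nat" where
  "transversal_number H X = Min {card T | T. transversal H X T}"

text \<open>Complete s-uniform t-partite hypergraph with sides V 1, ..., V t:
  edges are the sets consisting of one vertex from each of s distinct sides.\<close>
definition complete_multipartite_edges :: "(nat \<Rightarrow> 'a set) \<Rightarrow> nat \<Rightarrow> nat \<Rightarrow> 'a set set" where
  "complete_multipartite_edges V t s =
     {f ` I | I f. I \<subseteq> {1..t} \<and> card I = s \<and> (\<forall>i\<in>I. f i \<in> V i)}"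

definition is_partition_into_sides :: "'a set \<Rightarrow> (nat \<Rightarrow> 'a set) \<Rightarrow> nat \<Rightarrow> bool" where
  "is_partition_into_sides X V t \<longleftrightarrow>
     (\<forall>i\<in>{1..t}. V i \<noteq> {}) \<and>
     (\<forall>i\<in>{1..t}. \<forall>j\<in>{1..t}. i \<noteq> j \<longrightarrow> V i \<inter> V j = {}) \<and>
     (\<Union>i\<in>{1..t}. V i) = X"

text \<open>Polynomials over the field 'k in the variables of (finite) type 'a:
  finitely supported maps from monomials (exponent vectors) to coefficients.\<close>
type_synonym ('a, 'k) mpoly = "('a \<Rightarrow>\<^sub>0 nat) \<Rightarrow>\<^sub>0 'k"

definition Var :: "'a \<Rightarrow> ('a, 'k::comm_ring_1) mpoly" where
  "Var x = Poly_Mapping.single (Poly_Mapping.single x 1) 1"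

definition is_ideal :: "'r::comm_ring_1 set \<Rightarrow> bool" where
  "is_ideal I \<longleftrightarrow> 0 \<in> I \<and> (\<forall>a\<in>I. \<forall>b\<in>I. a + b \<in> I) \<and> (\<forall>a\<in>I. \<forall>r. r * a \<in> I)"

definition ideal_gen :: "'r::comm_ring_1 set \<Rightarrow> 'r set" where
  "ideal_gen S = \<Inter> {I. is_ideal I \<and> S \<subseteq> I}"

definition is_prime_ideal :: "'r::comm_ring_1 set \<Rightarrow> bool" where
  "is_prime_ideal P \<longleftrightarrow> is_ideal P \<and> P \<noteq> UNIV \<and> (\<forall>a b. a * b \<in> P \<longrightarrow> a \<in> P \<or> b \<in> P)"

definition prime_chain :: "(nat \<Rightarrow> 'r::comm_ring_1 set) \<Rightarrow> nat \<Rightarrow> bool" where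
  "prime_chain P n \<longleftrightarrow> (\<forall>i\<le>n. is_prime_ideal (P i)) \<and> (\<forall>i<n. P i \<subset> P (Suc i))"

text \<open>Krull dimension of R/I, via the correspondence between prime ideals of R/I
  and prime ideals of R containing I.\<close>
definition krull_dim_quot :: "'r::comm_ring_1 set \<Rightarrow> enat" where
  "krull_dim_quot I = Sup {enat n | n P. prime_chain P n \<and> I \<subseteq> P 0}"

definition prime_height :: "'r::comm_ring_1 set \<Rightarrow> enat" where
  "prime_height Q = Sup {enat n | n P. prime_chain P n \<and> P n = Q}"

definition ideal_height :: "'r::comm_ring_1 set \<Rightarrow> enat" where
  "ideal_height I = Inf {prime_height Q | Q. is_prime_ideal Q \<and> I \<subseteq> Q}"

definition edge_ideal :: "'a set set \<Rightarrow> ('a, 'k::comm_ring_1) mpoly set" where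
  "edge_ideal H = ideal_gen {(\<Prod>x\<in>e. Var x) | e. e \<in> H}"

end

theory Submission
  imports Defs
begin


lemma ideal_gen_ideal: "is_ideal (ideal_gen S)"
  unfolding ideal_gen_def is_ideal_def by auto

lemma ideal_gen_sub: "S \<subseteq> ideal_gen S"
  unfolding ideal_gen_def by auto

lemma ideal_gen_least: "is_ideal J \<Longrightarrow> S \<subseteq> J \<Longrightarrow> ideal_gen S \<subseteq> J"
  unfolding ideal_gen_def by auto

lemma ideal_mult_right: "is_ideal I \<Longrightarrow> a \<in> I \<Longrightarrow> a * r \<in> I"
  unfolding is_ideal_def by (metis mult.commute)

lemma ideal_mult_left: "is_ideal I \<Longrightarrow> a \<in> I \<Longrightarrow> r * a \<in> I"
  unfolding is_ideal_def by blast

lemma ideal_add: "is_ideal I \<Longrightarrow> a \<in> I \<Longrightarrow> b \<in> I \<Longrightarrow> a + b \<in> I"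
  unfolding is_ideal_def by blast

lemma ideal_zero: "is_ideal I \<Longrightarrow> 0 \<in> I"
  unfolding is_ideal_def by blast

lemma ideal_uminus: "is_ideal I \<Longrightarrow> a \<in> I \<Longrightarrow> - a \<in> I"
  using ideal_mult_left[of I a "-1"] by simp

lemma ideal_diff: "is_ideal I \<Longrightarrow> a \<in> I \<Longrightarrow> b \<in> I \<Longrightarrow> a - b \<in> I"
  using ideal_add[of I a "-b"] ideal_uminus by auto

lemma ideal_sum: "is_ideal I \<Longrightarrow> (\<And>x. x \<in> X \<Longrightarrow> f x \<in> I) \<Longrightarrow> sum f X \<in> I"
  by (induction X rule: infinite_finite_induct) (auto intro: ideal_zero ideal_add)

lemma ideal_add_cancel: "is_ideal I \<Longrightarrow> a + b \<in> I \<Longrightarrow> b \<in> I \<Longrightarrow> a \<in> I"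
  using ideal_diff[of I "a+b" b] by simp

lemma ideal_one_not: "is_ideal I \<Longrightarrow> I \<noteq> UNIV \<Longrightarrow> 1 \<notin> I"
  using ideal_mult_left[of I 1] by auto

lemma prime_power: "is_prime_ideal P \<Longrightarrow> a \<notin> P \<Longrightarrow> a ^ m \<notin> P"
proof (induction m)
  case 0 then show ?case unfolding is_prime_ideal_def using ideal_one_not by auto
next
  case (Suc m) then show ?case unfolding is_prime_ideal_def by auto
qed

lemma prime_mult: "is_prime_ideal P \<Longrightarrow> a \<notin> P \<Longrightarrow> b \<notin> P \<Longrightarrow> a * b \<notin> P"
  unfolding is_prime_ideal_def by auto

lemma prime_prod: "finite X \<Longrightarrow> is_prime_ideal P \<Longrightarrow> prod f X \<in> P \<Longrightarrow> \<exists>x\<in>X. f x \<in> P"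
proof (induction X rule: finite_induct)
  case empty then show ?case unfolding is_prime_ideal_def using ideal_one_not by auto
next
  case (insert x F) then show ?case unfolding is_prime_ideal_def by auto
qed


fun lmono :: "(nat \<Rightarrow> 'r::comm_ring_1) \<Rightarrow> nat list \<Rightarrow> 'r" where
  "lmono x [] = 1"
| "lmono x (a # as) = x 0 ^ a * lmono (\<lambda>i. x (Suc i)) as"

lemma chain_indep:
  fixes C :: "'k::field \<Rightarrow> 'r::comm_ring_1"
  assumes Cunit: "\<And>c. c \<noteq> 0 \<Longrightarrow> C c * C (inverse c) = 1"
  shows "finite M \<Longrightarrow> M \<noteq> {} \<Longrightarrow> (\<forall>\<alpha>\<in>M. length \<alpha> = k \<and> c \<alpha> \<noteq> 0)
    \<Longrightarrow> (\<forall>i\<le>k. is_prime_ideal (P i))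
    \<Longrightarrow> (\<forall>i<k. P i \<subseteq> P (Suc i) \<and> x i \<in> P (Suc i) \<and> x i \<notin> P i)
    \<Longrightarrow> (\<Sum>\<alpha>\<in>M. C (c \<alpha>) * lmono x \<alpha>) \<notin> P 0"
proof (induction k arbitrary: M c P x)
  case 0
  then have M: "M = {[]}" by auto
  have c: "c [] \<noteq> 0" using 0 M by auto
  have pr: "is_prime_ideal (P 0)" using 0 by auto
  show ?case
  proof
    assume "(\<Sum>\<alpha>\<in>M. C (c \<alpha>) * lmono x \<alpha>) \<in> P 0"
    then have "C (c []) \<in> P 0" using M by simp
    then have "C (c []) * C (inverse (c [])) \<in> P 0"
      using pr unfolding is_prime_ideal_def by (metis ideal_mult_right)
    then have "1 \<in> P 0" using Cunit[OF c] by simp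
    then show False using pr ideal_one_not unfolding is_prime_ideal_def by blast
  qed
next
  case (Suc k)
  note fin = Suc.prems(1) and ne = Suc.prems(2) and len = Suc.prems(3)
    and prm = Suc.prems(4) and ch = Suc.prems(5)
  define m where "m = Min (hd ` M)"
  have m_in: "m \<in> hd ` M" using fin ne unfolding m_def by auto
  have m_le: "\<And>\<alpha>. \<alpha> \<in> M \<Longrightarrow> m \<le> hd \<alpha>" using fin unfolding m_def by auto
  define M0 where "M0 = {\<beta>. m # \<beta> \<in> M}"
  define Mm where "Mm = {\<alpha>\<in>M. hd \<alpha> = m}"
  define M1 where "M1 = {\<alpha>\<in>M. hd \<alpha> \<noteq> m}"
  define x' where "x' = (\<lambda>i. x (Suc i))"
  define P' where "P' = (\<lambda>i. P (Suc i))"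
  have cons: "\<And>\<alpha>. \<alpha> \<in> M \<Longrightarrow> \<alpha> = hd \<alpha> # tl \<alpha>"
    using len by (metis Zero_not_Suc list.collapse list.size(3))
  have Mm_eq: "Mm = (Cons m) ` M0"
    unfolding Mm_def M0_def using cons by (auto simp: image_iff) (metis)
  have fin0: "finite M0"
  proof -
    have "M0 = tl ` Mm" unfolding Mm_eq by (auto simp: image_image)
    then show ?thesis unfolding Mm_def using fin by simp
  qed
  have ne0: "M0 \<noteq> {}" using m_in cons unfolding M0_def by (metis (mono_tags, lifting) empty_iff image_iff mem_Collect_eq)
  have len0: "\<forall>\<beta>\<in>M0. length \<beta> = k \<and> c (m # \<beta>) \<noteq> 0" using len unfolding M0_def by auto
  define S0 where "S0 = (\<Sum>\<beta>\<in>M0. C (c (m # \<beta>)) * lmono x' \<beta>)"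
  have IH: "S0 \<notin> P' 0"
    unfolding S0_def
    apply (rule Suc.IH[OF fin0 ne0 len0])
    using prm ch unfolding P'_def x'_def by auto
  define S1 where "S1 = (\<Sum>\<alpha>\<in>M1. C (c \<alpha>) * (x 0 ^ (hd \<alpha> - m - 1) * lmono x' (tl \<alpha>)))"
  have split: "M = Mm \<union> M1" "Mm \<inter> M1 = {}" unfolding Mm_def M1_def by auto
  have sumMm: "(\<Sum>\<alpha>\<in>Mm. C (c \<alpha>) * lmono x \<alpha>) = x 0 ^ m * S0"
  proof -
    have "(\<Sum>\<alpha>\<in>Mm. C (c \<alpha>) * lmono x \<alpha>) = (\<Sum>\<beta>\<in>M0. C (c (m # \<beta>)) * lmono x (m # \<beta>))"
      unfolding Mm_eq by (subst sum.reindex) (auto simp: inj_on_def)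
    also have "\<dots> = x 0 ^ m * S0"
      unfolding S0_def x'_def by (simp add: sum_distrib_left mult_ac)
    finally show ?thesis .
  qed
  have sumM1: "(\<Sum>\<alpha>\<in>M1. C (c \<alpha>) * lmono x \<alpha>) = x 0 ^ m * (x 0 * S1)"
  proof -
    have "(\<Sum>\<alpha>\<in>M1. C (c \<alpha>) * lmono x \<alpha>) = (\<Sum>\<alpha>\<in>M1. x 0 ^ m * (x 0 * (C (c \<alpha>) * (x 0 ^ (hd \<alpha> - m - 1) * lmono x' (tl \<alpha>)))))"
    proof (rule sum.cong)
      fix \<alpha> assume a: "\<alpha> \<in> M1"
      then have am: "\<alpha> \<in> M" "hd \<alpha> > m" using m_le unfolding M1_def by force+
      have e: "hd \<alpha> = m + 1 + (hd \<alpha> - m - 1)" using am by simp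
      have "lmono x \<alpha> = x 0 ^ hd \<alpha> * lmono x' (tl \<alpha>)"
        using cons[OF am(1)] unfolding x'_def by (metis lmono.simps(2))
      also have "\<dots> = x 0 ^ m * (x 0 * (x 0 ^ (hd \<alpha> - m - 1))) * lmono x' (tl \<alpha>)"
        by (subst e) (simp add: power_add)
      finally show "C (c \<alpha>) * lmono x \<alpha> = x 0 ^ m * (x 0 * (C (c \<alpha>) * (x 0 ^ (hd \<alpha> - m - 1) * lmono x' (tl \<alpha>))))"
        by (simp add: mult_ac)
    qed simp
    also have "\<dots> = x 0 ^ m * (x 0 * S1)" unfolding S1_def by (simp add: sum_distrib_left)
    finally show ?thesis .
  qed
  have total: "(\<Sum>\<alpha>\<in>M. C (c \<alpha>) * lmono x \<alpha>) = x 0 ^ m * (S0 + x 0 * S1)"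
    using sumMm sumM1 split fin by (simp add: sum.union_disjoint distrib_left)
  have pr0: "is_prime_ideal (P 0)" and pr1: "is_prime_ideal (P 1)" using prm by auto
  have id1: "is_ideal (P 1)" using pr1 unfolding is_prime_ideal_def by auto
  have x0: "x 0 \<in> P 1" "x 0 \<notin> P 0" "P 0 \<subseteq> P 1" using ch by auto
  have "S0 + x 0 * S1 \<notin> P 1"
  proof
    assume "S0 + x 0 * S1 \<in> P 1"
    moreover have "x 0 * S1 \<in> P 1" using id1 x0 ideal_mult_right by blast
    ultimately have "S0 \<in> P 1" using ideal_add_cancel id1 by blast
    then show False using IH unfolding P'_def by simp
  qed
  then have "S0 + x 0 * S1 \<notin> P 0" using x0 by auto
  moreover have "x 0 ^ m \<notin> P 0" using prime_power pr0 x0 by blast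
  ultimately show ?case unfolding total using prime_mult pr0 by blast
qed


lemma lookup_restr:
  "Poly_Mapping.lookup (Abs_poly_mapping (\<lambda>\<mu>. if Q \<mu> then Poly_Mapping.lookup p \<mu> else 0)) = (\<lambda>\<mu>. if Q \<mu> then Poly_Mapping.lookup p \<mu> else 0)"
proof -
  have "{x. (if Q x then Poly_Mapping.lookup p x else 0) \<noteq> 0} \<subseteq> Poly_Mapping.keys p" by (auto simp: lookup_not_eq_zero_eq_in_keys split: if_splits)
  then have "finite {x. (if Q x then Poly_Mapping.lookup p x else 0) \<noteq> 0}" by (rule finite_subset[OF _ finite_keys])
  then show ?thesis by simp
qed

lemma mpoly_no_zero_div:
  fixes p q :: "('a::finite \<Rightarrow>\<^sub>0 nat) \<Rightarrow>\<^sub>0 'k::field"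
  assumes "p \<noteq> 0" "q \<noteq> 0"
  shows "p * q \<noteq> 0"
proof -
  obtain es :: "'a list" where es: "distinct es" "set es = UNIV"
    using finite_distinct_list[OF finite_UNIV] by blast
  define kap :: "('a \<Rightarrow>\<^sub>0 nat) \<Rightarrow> (nat \<Rightarrow>\<^sub>0 nat)" where
    "kap = (\<lambda>\<mu>. Abs_poly_mapping (\<lambda>i. if i < length es then Poly_Mapping.lookup \<mu> (es ! i) else 0))"
  have lk: "Poly_Mapping.lookup (kap \<mu>) (i::nat) = (if i < length es then Poly_Mapping.lookup \<mu> (es ! i) else 0)" for \<mu> i
  proof -
    have "finite {i. (if i < length es then Poly_Mapping.lookup \<mu> (es ! i) else 0) \<noteq> 0}"
      by (rule finite_subset[of _ "{..<length es}"]) auto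
    then show ?thesis unfolding kap_def by simp
  qed
  have kadd: "kap (a + b) = kap a + kap b" for a b
    by (rule poly_mapping_eqI) (simp add: lk lookup_add)
  have kinj: "kap a = kap b \<Longrightarrow> a = b" for a b
  proof (rule poly_mapping_eqI)
    fix v assume e: "kap a = kap b"
    obtain i where i: "i < length es" "es ! i = v" using es by (metis UNIV_I in_set_conv_nth)
    show "Poly_Mapping.lookup a v = Poly_Mapping.lookup b v" using arg_cong[OF e, of "\<lambda>f. Poly_Mapping.lookup f i"] i by (simp add: lk)
  qed
  have lead: "\<exists>a\<in>Poly_Mapping.keys f. \<forall>b\<in>Poly_Mapping.keys f. b \<noteq> a \<longrightarrow> kap b < kap a"
    if "f \<noteq> 0" for f :: "('a \<Rightarrow>\<^sub>0 nat) \<Rightarrow>\<^sub>0 'k"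
  proof -
    have ne: "kap ` Poly_Mapping.keys f \<noteq> {}" using that by simp
    obtain a where a: "a \<in> Poly_Mapping.keys f" "kap a = Max (kap ` Poly_Mapping.keys f)"
      using Max_in[OF _ ne] by auto
    show ?thesis
    proof (intro bexI[OF _ a(1)] ballI impI)
      fix b assume "b \<in> Poly_Mapping.keys f" "b \<noteq> a"
      then have "kap b \<le> kap a" "kap b \<noteq> kap a" using a kinj by auto
      then show "kap b < kap a" by simp
    qed
  qed
  obtain a where a: "a \<in> Poly_Mapping.keys p" "\<And>b. b \<in> Poly_Mapping.keys p \<Longrightarrow> b \<noteq> a \<Longrightarrow> kap b < kap a"
    using lead[OF assms(1)] by blast
  obtain b where b: "b \<in> Poly_Mapping.keys q" "\<And>c. c \<in> Poly_Mapping.keys q \<Longrightarrow> c \<noteq> b \<Longrightarrow> kap c < kap b"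
    using lead[OF assms(2)] by blast
  define p' where "p' = p - Poly_Mapping.single a (Poly_Mapping.lookup p a)"
  define q' where "q' = q - Poly_Mapping.single b (Poly_Mapping.lookup q b)"
  have kp': "kap c < kap a" if "c \<in> Poly_Mapping.keys p'" for c
  proof -
    have "Poly_Mapping.lookup p' c \<noteq> 0" using that by (simp add: in_keys_iff)
    then have "c \<noteq> a" "c \<in> Poly_Mapping.keys p" unfolding p'_def by (auto simp: lookup_minus lookup_single in_keys_iff when_def split: if_splits)
    then show ?thesis using a by auto
  qed
  have kq': "kap c < kap b" if "c \<in> Poly_Mapping.keys q'" for c
  proof -
    have "Poly_Mapping.lookup q' c \<noteq> 0" using that by (simp add: in_keys_iff)
    then have "c \<noteq> b" "c \<in> Poly_Mapping.keys q" unfolding q'_def by (auto simp: lookup_minus lookup_single in_keys_iff when_def split: if_splits)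
    then show ?thesis using b by auto
  qed
  have dec: "p * q = Poly_Mapping.single (a + b) (Poly_Mapping.lookup p a * Poly_Mapping.lookup q b) + Poly_Mapping.single a (Poly_Mapping.lookup p a) * q'
      + p' * Poly_Mapping.single b (Poly_Mapping.lookup q b) + p' * q'"
  proof -
    have "p * q = (Poly_Mapping.single a (Poly_Mapping.lookup p a) + p') * (Poly_Mapping.single b (Poly_Mapping.lookup q b) + q')"
      unfolding p'_def q'_def by simp
    also have "\<dots> = Poly_Mapping.single a (Poly_Mapping.lookup p a) * Poly_Mapping.single b (Poly_Mapping.lookup q b) + Poly_Mapping.single a (Poly_Mapping.lookup p a) * q'
      + p' * Poly_Mapping.single b (Poly_Mapping.lookup q b) + p' * q'"
      by (simp only: distrib_left distrib_right add_ac)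
    finally show ?thesis by (simp only: mult_single)
  qed
  have n1: "a + b \<notin> Poly_Mapping.keys (Poly_Mapping.single a (Poly_Mapping.lookup p a) * q')"
  proof
    assume "a + b \<in> Poly_Mapping.keys (Poly_Mapping.single a (Poly_Mapping.lookup p a) * q')"
    then obtain c where c: "c \<in> Poly_Mapping.keys q'" "a + b = a + c"
      using keys_mult[of "Poly_Mapping.single a (Poly_Mapping.lookup p a)" q'] by (auto split: if_splits)
    then have "b = c" by simp
    then show False using kq'[OF c(1)] by simp
  qed
  have n2: "a + b \<notin> Poly_Mapping.keys (p' * Poly_Mapping.single b (Poly_Mapping.lookup q b))"
  proof
    assume "a + b \<in> Poly_Mapping.keys (p' * Poly_Mapping.single b (Poly_Mapping.lookup q b))"
    then obtain c where c: "c \<in> Poly_Mapping.keys p'" "a + b = c + b"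
      using keys_mult[of p' "Poly_Mapping.single b (Poly_Mapping.lookup q b)"] by (auto split: if_splits)
    then have "a = c" by simp
    then show False using kp'[OF c(1)] by simp
  qed
  have n3: "a + b \<notin> Poly_Mapping.keys (p' * q')"
  proof
    assume "a + b \<in> Poly_Mapping.keys (p' * q')"
    then obtain c d where c: "c \<in> Poly_Mapping.keys p'" "d \<in> Poly_Mapping.keys q'" "a + b = c + d"
      using keys_mult[of p' q'] by auto
    have "kap c + kap d < kap a + kap b" using kp'[OF c(1)] kq'[OF c(2)] by (rule add_strict_mono)
    then have "kap (c + d) < kap (a + b)" by (simp add: kadd)
    then show False using c(3) by simp
  qed
  have "Poly_Mapping.lookup (p * q) (a + b) = Poly_Mapping.lookup p a * Poly_Mapping.lookup q b"
    unfolding dec using n1 n2 n3 by (simp add: lookup_add in_keys_iff)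
  moreover have "Poly_Mapping.lookup p a * Poly_Mapping.lookup q b \<noteq> 0" using a(1) b(1) by (simp add: in_keys_iff)
  ultimately show ?thesis by auto
qed


definition VI :: "'a set \<Rightarrow> ('a, 'k::field) mpoly set" where
  "VI A = {p. \<forall>\<mu>\<in>Poly_Mapping.keys p. \<exists>v\<in>A. Poly_Mapping.lookup \<mu> v > 0}"

lemma VI_ideal: "is_ideal (VI A :: ('a, 'k::field) mpoly set)"
  unfolding is_ideal_def
proof (intro conjI ballI allI)
  show "0 \<in> VI A" unfolding VI_def by simp
next
  fix a b :: "('a, 'k) mpoly" assume "a \<in> VI A" "b \<in> VI A"
  then show "a + b \<in> VI A" unfolding VI_def using keys_add[of a b] by blast
next
  fix a r :: "('a, 'k) mpoly" assume a: "a \<in> VI A"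
  show "r * a \<in> VI A" unfolding VI_def mem_Collect_eq
  proof
    fix \<mu> assume "\<mu> \<in> Poly_Mapping.keys (r * a)"
    then obtain x y where "\<mu> = x + y" "y \<in> Poly_Mapping.keys a" using keys_mult[of r a] by auto
    then show "\<exists>v\<in>A. Poly_Mapping.lookup \<mu> v > 0" using a unfolding VI_def by (auto simp: lookup_add)
  qed
qed

lemma keys_Var: "Poly_Mapping.keys (Var v :: ('a, 'k::field) mpoly) = {Poly_Mapping.single v 1}"
  unfolding Var_def by simp

lemma Var_in_VI: "(Var v :: ('a, 'k::field) mpoly) \<in> VI A \<longleftrightarrow> v \<in> A"
  unfolding VI_def by (auto simp: keys_Var lookup_single when_def)

lemma poly_sum: "p = (\<Sum>\<mu>\<in>Poly_Mapping.keys p. Poly_Mapping.single \<mu> (Poly_Mapping.lookup p \<mu>))"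
proof (rule poly_mapping_eqI)
  fix k
  show "Poly_Mapping.lookup p k = Poly_Mapping.lookup (\<Sum>\<mu>\<in>Poly_Mapping.keys p. Poly_Mapping.single \<mu> (Poly_Mapping.lookup p \<mu>)) k"
    by (simp add: lookup_sum lookup_single when_def in_keys_iff)
qed


lemma VI_gen: "ideal_gen (Var ` A) = (VI A :: ('a, 'k::field) mpoly set)"
proof
  show "ideal_gen (Var ` A) \<subseteq> (VI A :: ('a, 'k::field) mpoly set)"
    by (rule ideal_gen_least[OF VI_ideal]) (auto simp: Var_in_VI)
next
  show "(VI A :: ('a, 'k::field) mpoly set) \<subseteq> ideal_gen (Var ` A)"
  proof
    fix p :: "('a, 'k) mpoly" assume p: "p \<in> VI A"
    have "(\<Sum>\<mu>\<in>Poly_Mapping.keys p. Poly_Mapping.single \<mu> (Poly_Mapping.lookup p \<mu>)) \<in> ideal_gen (Var ` A)"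
    proof (rule ideal_sum[OF ideal_gen_ideal])
      fix \<mu> assume "\<mu> \<in> Poly_Mapping.keys p"
      then obtain v where v: "v \<in> A" "Poly_Mapping.lookup \<mu> v > 0" using p unfolding VI_def by auto
      have e: "(\<mu> - Poly_Mapping.single v 1) + Poly_Mapping.single v 1 = \<mu>"
        by (rule poly_mapping_eqI) (use v in \<open>auto simp: lookup_add lookup_minus lookup_single when_def\<close>)
      have "Poly_Mapping.single \<mu> (Poly_Mapping.lookup p \<mu>) = Poly_Mapping.single (\<mu> - Poly_Mapping.single v 1) (Poly_Mapping.lookup p \<mu>) * (Var v :: ('a, 'k) mpoly)"
        unfolding Var_def mult_single e by simp
      moreover have "(Var v :: ('a, 'k) mpoly) \<in> ideal_gen (Var ` A)" using ideal_gen_sub v by blast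
      ultimately show "Poly_Mapping.single \<mu> (Poly_Mapping.lookup p \<mu>) \<in> ideal_gen (Var ` A)"
        using ideal_mult_left[OF ideal_gen_ideal, of "Var v" "Var ` A"] by simp
    qed
    then show "p \<in> ideal_gen (Var ` A)" using poly_sum[of p] by simp
  qed
qed


lemma VI_prime: "is_prime_ideal (VI A :: ('a::finite, 'k::field) mpoly set)"
proof -
  have ne: "VI A \<noteq> (UNIV :: ('a, 'k) mpoly set)"
  proof
    assume "VI A = (UNIV :: ('a, 'k) mpoly set)"
    then have "(1 :: ('a, 'k) mpoly) \<in> VI A" by simp
    then show False unfolding VI_def by simp
  qed
  have "p \<in> VI A \<or> q \<in> VI A" if pq: "p * q \<in> VI A" for p q :: "('a, 'k) mpoly"
  proof -
  define av where "av = (\<lambda>\<mu> :: 'a \<Rightarrow>\<^sub>0 nat. \<forall>v\<in>A. Poly_Mapping.lookup \<mu> v = 0)"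
  have avadd: "av (a + b) \<longleftrightarrow> av a \<and> av b" for a b unfolding av_def by (auto simp: lookup_add)
  define r1 where "r1 = (\<lambda>f :: ('a, 'k) mpoly. Abs_poly_mapping (\<lambda>\<mu>. if av \<mu> then Poly_Mapping.lookup f \<mu> else 0))"
  have lr1: "Poly_Mapping.lookup (r1 f) \<mu> = (if av \<mu> then Poly_Mapping.lookup f \<mu> else 0)" for f \<mu>
    unfolding r1_def lookup_restr by simp
  have r2: "f - r1 f \<in> VI A" for f
    unfolding VI_def mem_Collect_eq
  proof
    fix \<mu> assume "\<mu> \<in> Poly_Mapping.keys (f - r1 f)"
    then have "Poly_Mapping.lookup (f - r1 f) \<mu> \<noteq> 0" by (simp add: in_keys_iff)
    then have "\<not> av \<mu>" by (auto simp: lookup_minus lr1 split: if_splits)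
    then show "\<exists>v\<in>A. Poly_Mapping.lookup \<mu> v > 0" unfolding av_def by auto
  qed
  have r1keys: "\<mu> \<in> Poly_Mapping.keys (r1 f) \<Longrightarrow> av \<mu>" for f \<mu>
    by (auto simp: in_keys_iff lr1 split: if_splits)
  have nz: "r1 f \<noteq> 0" if "f \<notin> VI A" for f
  proof
    assume z: "r1 f = 0"
    have "f = r1 f + (f - r1 f)" by simp
    then have "f \<in> VI A" using z r2[of f] by simp
    then show False using that by simp
  qed
  show "p \<in> VI A \<or> q \<in> VI A"
  proof (rule ccontr)
    assume "\<not> (p \<in> VI A \<or> q \<in> VI A)"
    then have np: "p \<notin> VI A" "q \<notin> VI A" by auto
    have "r1 p * r1 q \<noteq> 0" using mpoly_no_zero_div nz np by blast
    then obtain \<mu> where mu: "\<mu> \<in> Poly_Mapping.keys (r1 p * r1 q)" by fastforce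
    then obtain a b where ab: "\<mu> = a + b" "a \<in> Poly_Mapping.keys (r1 p)" "b \<in> Poly_Mapping.keys (r1 q)"
      using keys_mult[of "r1 p" "r1 q"] by blast
    have avmu: "av \<mu>" using ab r1keys avadd by simp
    have dec: "p * q = r1 p * r1 q + (r1 p * (q - r1 q) + (p - r1 p) * q)" by (simp add: algebra_simps)
    have "r1 p * (q - r1 q) \<in> VI A" by (rule ideal_mult_left[OF VI_ideal r2])
    moreover have "(p - r1 p) * q \<in> VI A" by (rule ideal_mult_right[OF VI_ideal r2])
    ultimately have "r1 p * (q - r1 q) + (p - r1 p) * q \<in> VI A" by (rule ideal_add[OF VI_ideal])
    moreover have "r1 p * r1 q + (r1 p * (q - r1 q) + (p - r1 p) * q) \<in> VI A" using pq dec by simp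
    ultimately have "r1 p * r1 q \<in> VI A" using ideal_add_cancel[OF VI_ideal] by blast
    then have "\<exists>v\<in>A. Poly_Mapping.lookup \<mu> v > 0" using mu unfolding VI_def by blast
    then show False using avmu unfolding av_def by auto
  qed
  qed
  then show ?thesis unfolding is_prime_ideal_def using ne VI_ideal by blast
qed


interpretation pv: vector_space "\<lambda>(c::'k::field) (p::('a, 'k) mpoly). Poly_Mapping.single 0 c * p"
  by unfold_locales (simp_all add: distrib_left distrib_right single_add mult.assoc[symmetric] mult_single)

definition bnd :: "nat \<Rightarrow> ('a, 'k::field) mpoly \<Rightarrow> bool" where
  "bnd N p \<longleftrightarrow> (\<forall>\<mu>\<in>Poly_Mapping.keys p. \<forall>v. Poly_Mapping.lookup \<mu> v \<le> N)"

lemma bnd_mono: "bnd N p \<Longrightarrow> N \<le> N' \<Longrightarrow> bnd N' p"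
  unfolding bnd_def by (meson order_trans)

lemma bnd_mult: "bnd a p \<Longrightarrow> bnd b q \<Longrightarrow> bnd (a + b) (p * q)"
  unfolding bnd_def
proof
  fix \<mu> assume p: "\<forall>\<mu>\<in>Poly_Mapping.keys p. \<forall>v. Poly_Mapping.lookup \<mu> v \<le> a"
    and q: "\<forall>\<mu>\<in>Poly_Mapping.keys q. \<forall>v. Poly_Mapping.lookup \<mu> v \<le> b"
    and m: "\<mu> \<in> Poly_Mapping.keys (p * q)"
  then obtain x y where "\<mu> = x + y" "x \<in> Poly_Mapping.keys p" "y \<in> Poly_Mapping.keys q"
    using keys_mult[of p q] by blast
  then show "\<forall>v. Poly_Mapping.lookup \<mu> v \<le> a + b" using p q by (simp add: lookup_add add_mono)
qed

lemma bnd_one: "bnd 0 1"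
  unfolding bnd_def by simp

lemma bnd_power: "bnd a p \<Longrightarrow> bnd (m * a) (p ^ m)"
proof (induction m)
  case 0 then show ?case using bnd_one by simp
next
  case (Suc m)
  then have "bnd (a + m * a) (p * p ^ m)" using bnd_mult by blast
  then show ?case by simp
qed

lemma bnd_exists: "\<exists>N. bnd N (p :: ('a::finite, 'k::field) mpoly)"
proof -
  define N where "N = (\<Sum>\<mu>\<in>Poly_Mapping.keys p. \<Sum>v\<in>UNIV. Poly_Mapping.lookup \<mu> v)"
  have "bnd N p" unfolding bnd_def
  proof (intro ballI allI)
    fix \<mu> v assume m: "\<mu> \<in> Poly_Mapping.keys p"
    have "Poly_Mapping.lookup \<mu> v \<le> (\<Sum>v\<in>UNIV. Poly_Mapping.lookup \<mu> v)"
      by (rule member_le_sum) auto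
    also have "\<dots> \<le> N" unfolding N_def using m
      by (intro member_le_sum[of \<mu> "Poly_Mapping.keys p" "\<lambda>\<mu>. \<Sum>v\<in>UNIV. Poly_Mapping.lookup \<mu> v"]) auto
    finally show "Poly_Mapping.lookup \<mu> v \<le> N" .
  qed
  then show ?thesis by blast
qed

lemma bnd_lmono: "(\<forall>i<length \<alpha>. bnd E (y i)) \<Longrightarrow> bnd (E * sum_list \<alpha>) (lmono y \<alpha>)"
proof (induction \<alpha> arbitrary: y)
  case Nil then show ?case using bnd_one by simp
next
  case (Cons a as)
  have "bnd (E * sum_list as) (lmono (\<lambda>i. y (Suc i)) as)" using Cons by auto
  moreover have "bnd (a * E) (y 0 ^ a)" using Cons.prems bnd_power by auto
  ultimately have "bnd (a * E + E * sum_list as) (y 0 ^ a * lmono (\<lambda>i. y (Suc i)) as)"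
    using bnd_mult by blast
  then show ?case by (simp add: algebra_simps)
qed

lemma sum_list_bound: "(\<forall>x\<in>set \<alpha>. x \<le> D) \<Longrightarrow> sum_list \<alpha> \<le> length \<alpha> * (D::nat)"
  by (induction \<alpha>) auto

definition monsp :: "nat \<Rightarrow> ('a, 'k::field) mpoly set" where
  "monsp N = (\<lambda>\<mu>. Poly_Mapping.single \<mu> 1) ` {\<mu>. \<forall>v. Poly_Mapping.lookup \<mu> v \<le> N}"

lemma bnd_span: "bnd N p \<Longrightarrow> p \<in> pv.span (monsp N)"
proof -
  assume b: "bnd N p"
  have "(\<Sum>\<mu>\<in>Poly_Mapping.keys p. Poly_Mapping.single 0 (Poly_Mapping.lookup p \<mu>) * Poly_Mapping.single \<mu> 1) \<in> pv.span (monsp N)"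
  proof (rule pv.span_sum)
    fix \<mu> assume "\<mu> \<in> Poly_Mapping.keys p"
    then have "Poly_Mapping.single \<mu> 1 \<in> monsp N" using b unfolding bnd_def monsp_def by auto
    then show "Poly_Mapping.single 0 (Poly_Mapping.lookup p \<mu>) * Poly_Mapping.single \<mu> 1 \<in> pv.span (monsp N)"
      using pv.span_base pv.span_scale by blast
  qed
  moreover have "(\<Sum>\<mu>\<in>Poly_Mapping.keys p. Poly_Mapping.single 0 (Poly_Mapping.lookup p \<mu>) * Poly_Mapping.single \<mu> 1) = p"
    by (subst (2) poly_sum) (simp add: mult_single)
  ultimately show ?thesis by simp
qed

lemma card_monos: "finite (monsp N :: ('a::finite, 'k::field) mpoly set) \<and> card (monsp N :: ('a, 'k) mpoly set) \<le> (N + 1) ^ card (UNIV :: 'a set)"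
proof -
  obtain es :: "'a list" where es: "distinct es" "set es = UNIV"
    using finite_distinct_list[OF finite_UNIV] by blast
  have les: "length es = card (UNIV :: 'a set)" using es distinct_card by fastforce
  define Mon where "Mon = {\<mu> :: 'a \<Rightarrow>\<^sub>0 nat. \<forall>v. Poly_Mapping.lookup \<mu> v \<le> N}"
  define f where "f = (\<lambda>\<mu> :: 'a \<Rightarrow>\<^sub>0 nat. map (Poly_Mapping.lookup \<mu>) es)"
  define Ls where "Ls = {xs. set xs \<subseteq> {..N} \<and> length xs = card (UNIV :: 'a set)}"
  have finL: "finite Ls" unfolding Ls_def by (rule finite_lists_length_eq) simp
  have cardL: "card Ls = (N + 1) ^ card (UNIV :: 'a set)" unfolding Ls_def by (subst card_lists_length_eq) simp_all
  have inj: "inj_on f Mon"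
  proof
    fix a b assume "a \<in> Mon" "b \<in> Mon" "f a = f b"
    then have "\<forall>v\<in>set es. Poly_Mapping.lookup a v = Poly_Mapping.lookup b v"
      unfolding f_def by (simp add: map_eq_conv)
    then show "a = b" using es by (intro poly_mapping_eqI) auto
  qed
  have sub: "f ` Mon \<subseteq> Ls" unfolding f_def Mon_def Ls_def using les by auto
  have finM: "finite Mon" using finite_imageD[OF finite_subset[OF sub finL] inj] .
  have "card Mon \<le> card Ls" by (rule card_inj_on_le[OF inj sub finL])
  moreover have "card (monsp N :: ('a, 'k) mpoly set) \<le> card Mon" unfolding monsp_def Mon_def by (rule card_image_le) (use finM in \<open>simp add: Mon_def\<close>)
  moreover have "finite (monsp N :: ('a, 'k) mpoly set)" unfolding monsp_def using finM by (simp add: Mon_def)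
  ultimately show ?thesis using cardL by simp
qed


lemma alg_dep:
  fixes y :: "nat \<Rightarrow> ('a::finite, 'k::field) mpoly"
  shows "\<exists>M c. finite M \<and> M \<noteq> {} \<and> (\<forall>\<alpha>\<in>M. length \<alpha> = Suc (card (UNIV::'a set)) \<and> c \<alpha> \<noteq> 0)
     \<and> (\<Sum>\<alpha>\<in>M. Poly_Mapping.single 0 (c \<alpha>) * lmono y \<alpha>) = 0"
proof -
  define n where "n = card (UNIV::'a set)"
  have "\<forall>i. \<exists>N. bnd N (y i)" using bnd_exists by blast
  then obtain Nf where Nf: "\<And>i. bnd (Nf i) (y i)" by metis
  define E where "E = (\<Sum>i\<le>n. Nf i)"
  have bE: "bnd E (y i)" if "i \<le> n" for i
    using bnd_mono[OF Nf] that unfolding E_def by (meson finite_atMost atMost_iff member_le_sum zero_le)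
  define A0 where "A0 = (n + 1) * E + 1"
  define D where "D = A0 ^ n"
  define N where "N = (n + 1) * D * E"
  define L where "L = {\<alpha>. set \<alpha> \<subseteq> {..D} \<and> length \<alpha> = Suc n}"
  have finL: "finite L" unfolding L_def by (rule finite_lists_length_eq) simp
  have cardL: "card L = (D + 1) ^ Suc n" unfolding L_def by (subst card_lists_length_eq) simp_all
  have bL: "bnd N (lmono y \<alpha>)" if "\<alpha> \<in> L" for \<alpha>
  proof -
    have l: "length \<alpha> = Suc n" "\<forall>x\<in>set \<alpha>. x \<le> D" using that unfolding L_def by auto
    have "bnd (E * sum_list \<alpha>) (lmono y \<alpha>)" using bnd_lmono[of \<alpha> E y] bE l by auto
    moreover have "E * sum_list \<alpha> \<le> N"
      using sum_list_bound[OF l(2)] l(1) unfolding N_def by (simp add: mult_le_mono2 mult.commute mult.left_commute)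
    ultimately show ?thesis using bnd_mono by blast
  qed
  show ?thesis
  proof (cases "inj_on (lmono y) L")
    case False
    then obtain \<alpha> \<beta> where ab: "\<alpha> \<in> L" "\<beta> \<in> L" "\<alpha> \<noteq> \<beta>" "lmono y \<alpha> = lmono y \<beta>"
      unfolding inj_on_def by blast
    define c where "c = (\<lambda>\<gamma>. if \<gamma> = \<alpha> then (1::'k) else -1)"
    have "(\<Sum>\<gamma>\<in>{\<alpha>, \<beta>}. Poly_Mapping.single 0 (c \<gamma>) * lmono y \<gamma>) = 0"
      using ab unfolding c_def by (simp add: single_uminus)
    moreover have "\<forall>\<gamma>\<in>{\<alpha>, \<beta>}. length \<gamma> = Suc n \<and> c \<gamma> \<noteq> 0" using ab unfolding c_def L_def by auto
    ultimately show ?thesis unfolding n_def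
      by (intro exI[of _ "{\<alpha>, \<beta>}"] exI[of _ c]) simp
  next
    case True
    define S where "S = lmono y ` L"
    have cardS: "card S = (D + 1) ^ Suc n" unfolding S_def using card_image[OF True] cardL by simp
    have spS: "S \<subseteq> pv.span (monsp N :: ('a, 'k) mpoly set)" unfolding S_def using bL bnd_span by (auto simp del: pv.span_eq_iff)
    have cm: "finite (monsp N :: ('a, 'k) mpoly set)" "card (monsp N :: ('a, 'k) mpoly set) \<le> (N + 1) ^ n"
      using card_monos[of N] unfolding n_def by auto
    have "N + 1 \<le> (D + 1) * A0" unfolding N_def A0_def by (simp add: algebra_simps)
    then have "(N + 1) ^ n \<le> ((D + 1) * A0) ^ n" by (rule power_mono) simp
    also have "\<dots> = (D + 1) ^ n * D" by (simp only: power_mult_distrib D_def)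
    also have "\<dots> < (D + 1) ^ n * (D + 1)" by simp
    finally have lt: "(N + 1) ^ n < (D + 1) ^ Suc n" by (simp add: mult.commute)
    have "pv.dependent S"
    proof (rule ccontr)
      assume "\<not> pv.dependent S"
      then have "card S \<le> card (monsp N :: ('a, 'k) mpoly set)" using pv.independent_span_bound[OF cm(1) _ spS] by blast
      then show False using cardS cm(2) lt by simp
    qed
    then obtain t u where tu: "finite t" "t \<subseteq> S" "(\<Sum>v\<in>t. Poly_Mapping.single 0 (u v) * v) = 0" "\<exists>v\<in>t. u v \<noteq> 0"
      unfolding pv.dependent_explicit by blast
    define M where "M = {\<alpha>\<in>L. lmono y \<alpha> \<in> t \<and> u (lmono y \<alpha>) \<noteq> 0}"
    define c where "c = (\<lambda>\<alpha>. u (lmono y \<alpha>))"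
    have finM: "finite M" unfolding M_def using finL by simp
    have neM: "M \<noteq> {}" using tu(2,4) unfolding M_def S_def by blast
    have imM: "lmono y ` M = {v\<in>t. u v \<noteq> 0}" unfolding M_def using tu(2) unfolding S_def by blast
    have injM: "inj_on (lmono y) M" using True unfolding M_def by (rule inj_on_subset) auto
    have "(\<Sum>\<alpha>\<in>M. Poly_Mapping.single 0 (c \<alpha>) * lmono y \<alpha>) = (\<Sum>v\<in>lmono y ` M. Poly_Mapping.single 0 (u v) * v)"
      unfolding c_def by (simp add: sum.reindex[OF injM])
    also have "\<dots> = (\<Sum>v\<in>t. Poly_Mapping.single 0 (u v) * v)"
      unfolding imM by (rule sum.mono_neutral_left) (use tu(1) in auto)
    finally have "(\<Sum>\<alpha>\<in>M. Poly_Mapping.single 0 (c \<alpha>) * lmono y \<alpha>) = 0" using tu(3) by simp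
    moreover have "\<forall>\<alpha>\<in>M. length \<alpha> = Suc n \<and> c \<alpha> \<noteq> 0" unfolding M_def L_def c_def by auto
    ultimately show ?thesis using finM neM unfolding n_def
      by (intro exI[of _ M] exI[of _ c]) simp
  qed
qed

theorem chain_bound:
  fixes P :: "nat \<Rightarrow> ('a::finite, 'k::field) mpoly set"
  assumes "prime_chain P k"
  shows "k \<le> card (UNIV :: 'a set)"
proof (rule ccontr)
  define n where "n = card (UNIV :: 'a set)"
  assume "\<not> k \<le> card (UNIV :: 'a set)"
  then have kn: "Suc n \<le> k" unfolding n_def by simp
  have "\<forall>i<k. \<exists>z. z \<in> P (Suc i) \<and> z \<notin> P i" using assms unfolding prime_chain_def by blast
  then obtain x where x: "\<And>i. i < k \<Longrightarrow> x i \<in> P (Suc i) \<and> x i \<notin> P i" by metis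
  obtain M c where Mc: "finite M" "M \<noteq> {}" "\<forall>\<alpha>\<in>M. length \<alpha> = Suc n \<and> c \<alpha> \<noteq> 0"
      "(\<Sum>\<alpha>\<in>M. Poly_Mapping.single 0 (c \<alpha>) * lmono x \<alpha>) = 0"
    using alg_dep[of x] unfolding n_def by blast
  have Cu: "\<And>c. c \<noteq> (0::'k) \<Longrightarrow> Poly_Mapping.single 0 c * Poly_Mapping.single 0 (inverse c) = (1 :: ('a, 'k) mpoly)"
    by (simp add: mult_single)
  have "(\<Sum>\<alpha>\<in>M. Poly_Mapping.single 0 (c \<alpha>) * lmono x \<alpha>) \<notin> P 0"
  proof (rule chain_indep[where C = "Poly_Mapping.single 0", OF Cu Mc(1,2,3)])
    show "\<forall>i\<le>Suc n. is_prime_ideal (P i)" using assms kn unfolding prime_chain_def by auto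
    show "\<forall>i<Suc n. P i \<subseteq> P (Suc i) \<and> x i \<in> P (Suc i) \<and> x i \<notin> P i"
    proof (intro allI impI)
      fix i assume i: "i < Suc n"
      then have ik: "i < k" using kn by simp
      then have "P i \<subset> P (Suc i)" using assms unfolding prime_chain_def by blast
      then show "P i \<subseteq> P (Suc i) \<and> x i \<in> P (Suc i) \<and> x i \<notin> P i" using x[OF ik] by blast
    qed
  qed
  moreover have "0 \<in> P 0" using assms unfolding prime_chain_def is_prime_ideal_def by (auto intro: ideal_zero)
  ultimately show False using Mc(4) by simp
qed


lemma VI_mono: "A \<subseteq> B \<Longrightarrow> VI A \<subseteq> VI B"
  unfolding VI_def by blast

lemma var_chain:
  assumes "distinct as" "set as \<inter> B = {}"
  shows "prime_chain (\<lambda>i. VI (B \<union> set (take i as)) :: ('a::finite, 'k::field) mpoly set) (length as)"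
  unfolding prime_chain_def
proof (intro conjI allI impI)
  fix i show "is_prime_ideal (VI (B \<union> set (take i as)) :: ('a, 'k) mpoly set)" by (rule VI_prime)
next
  fix i assume i: "i < length as"
  have tk: "take (Suc i) as = take i as @ [as ! i]" using i by (simp add: take_Suc_conv_app_nth)
  have "as ! i \<notin> set (take i as)"
  proof
    assume "as ! i \<in> set (take i as)"
    then obtain j where j: "j < length (take i as)" "take i as ! j = as ! i" by (auto simp: in_set_conv_nth)
    then have "j < i" "as ! j = as ! i" using i by auto
    then show False using assms(1) i nth_eq_iff_index_eq[of as j i] by simp
  qed
  moreover have "as ! i \<notin> B" using assms(2) i nth_mem by blast
  ultimately have nin: "as ! i \<notin> B \<union> set (take i as)" by simp
  have sub: "VI (B \<union> set (take i as)) \<subseteq> (VI (B \<union> set (take (Suc i) as)) :: ('a, 'k) mpoly set)"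
    by (rule VI_mono) (auto simp: tk)
  have "(Var (as ! i) :: ('a, 'k) mpoly) \<in> VI (B \<union> set (take (Suc i) as))" by (simp add: Var_in_VI tk)
  moreover have "(Var (as ! i) :: ('a, 'k) mpoly) \<notin> VI (B \<union> set (take i as))" using nin by (simp add: Var_in_VI)
  ultimately show "VI (B \<union> set (take i as)) \<subset> (VI (B \<union> set (take (Suc i) as)) :: ('a, 'k) mpoly set)"
    using sub by blast
qed

lemma chain_concat:
  assumes Q: "prime_chain Q a" and P: "prime_chain P k" and sub: "Q a \<subseteq> P 0"
  shows "prime_chain (\<lambda>i. if i < a then Q i else P (i - a)) (a + k)"
  unfolding prime_chain_def
proof (intro conjI allI impI)
  fix i assume "i \<le> a + k"
  then show "is_prime_ideal (if i < a then Q i else P (i - a))"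
    using Q P unfolding prime_chain_def by auto
next
  fix i assume i: "i < a + k"
  show "(if i < a then Q i else P (i - a)) \<subset> (if Suc i < a then Q (Suc i) else P (Suc i - a))"
  proof (cases "Suc i < a")
    case True then show ?thesis using Q unfolding prime_chain_def by auto
  next
    case False
    show ?thesis
    proof (cases "Suc i = a")
      case True
      then have "Q i \<subset> Q a" using Q unfolding prime_chain_def by auto
      then show ?thesis using True sub by auto
    next
      case False
      then have "a \<le> i" using \<open>\<not> Suc i < a\<close> by simp
      then have "Suc i - a = Suc (i - a)" "i - a < k" using i by auto
      then show ?thesis using P \<open>a \<le> i\<close> unfolding prime_chain_def by auto
    qed
  qed
qed

lemma list_of_set: "finite (S :: 'a set) \<Longrightarrow> \<exists>as. distinct as \<and> set as = S \<and> length as = card S"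
  using finite_distinct_list distinct_card by metis

lemma edge_ideal_sub_VI:
  assumes "\<forall>e\<in>H. T \<inter> e \<noteq> {}"
  shows "edge_ideal H \<subseteq> (VI T :: ('a::finite, 'k::field) mpoly set)"
  unfolding edge_ideal_def
proof (rule ideal_gen_least[OF VI_ideal])
  show "{\<Prod>x\<in>e. Var x |e. e \<in> H} \<subseteq> (VI T :: ('a, 'k) mpoly set)"
  proof
    fix p :: "('a, 'k) mpoly" assume "p \<in> {\<Prod>x\<in>e. Var x |e. e \<in> H}"
    then obtain e where e: "e \<in> H" "p = (\<Prod>x\<in>e. Var x)" by blast
    then obtain x where x: "x \<in> T" "x \<in> e" using assms by blast
    have "p = Var x * (\<Prod>y\<in>e - {x}. Var y)" using e x by (simp add: prod.remove)
    moreover have "(Var x :: ('a, 'k) mpoly) \<in> VI T" using x by (simp add: Var_in_VI)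
    ultimately show "p \<in> VI T" using ideal_mult_right[OF VI_ideal] by simp
  qed
qed

lemma prime_vars_transversal:
  fixes Q :: "('a::finite, 'k::field) mpoly set"
  assumes pr: "is_prime_ideal Q" and sub: "edge_ideal H \<subseteq> Q"
  shows "\<forall>e\<in>H. {v. Var v \<in> Q} \<inter> e \<noteq> {}" and "VI {v. Var v \<in> Q} \<subseteq> Q"
proof -
  show "\<forall>e\<in>H. {v. Var v \<in> Q} \<inter> e \<noteq> {}"
  proof
    fix e assume e: "e \<in> H"
    have "(\<Prod>x\<in>e. Var x :: ('a, 'k) mpoly) \<in> edge_ideal H"
      unfolding edge_ideal_def by (rule subsetD[OF ideal_gen_sub]) (use e in blast)
    then have "(\<Prod>x\<in>e. Var x :: ('a, 'k) mpoly) \<in> Q" using sub by blast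
    then obtain x where "x \<in> e" "Var x \<in> Q" using prime_prod[OF finite pr] by blast
    then show "{v. Var v \<in> Q} \<inter> e \<noteq> {}" by blast
  qed
  have "is_ideal Q" using pr unfolding is_prime_ideal_def by simp
  then have "ideal_gen (Var ` {v. Var v \<in> Q}) \<subseteq> Q" by (rule ideal_gen_least) blast
  then show "VI {v. Var v \<in> Q} \<subseteq> Q" by (simp add: VI_gen)
qed


definition smet :: "(nat \<Rightarrow> 'a set) \<Rightarrow> nat \<Rightarrow> 'a set \<Rightarrow> nat set" where
  "smet V t S = {i\<in>{1..t}. S \<inter> V i \<noteq> {}}"

lemma smet_fin: "finite (smet V t S)" and smet_sub: "smet V t S \<subseteq> {1..t}"
  unfolding smet_def by auto

lemma smet_mono: "S \<subseteq> S' \<Longrightarrow> smet V t S \<subseteq> smet V t S'"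
  unfolding smet_def by auto

lemma edge_sub_iff:
  "(\<exists>e\<in>complete_multipartite_edges V t s. e \<subseteq> S) \<longleftrightarrow> s \<le> card (smet V t S)"
proof
  assume "\<exists>e\<in>complete_multipartite_edges V t s. e \<subseteq> S"
  then obtain I f where If: "I \<subseteq> {1..t}" "card I = s" "\<forall>i\<in>I. f i \<in> V i" "f ` I \<subseteq> S"
    unfolding complete_multipartite_edges_def by blast
  have "I \<subseteq> smet V t S" unfolding smet_def using If by blast
  then show "s \<le> card (smet V t S)" using If(2) card_mono[OF smet_fin, of I V t S] by simp
next
  assume "s \<le> card (smet V t S)"
  then obtain I where I: "I \<subseteq> smet V t S" "card I = s" using obtain_subset_with_card_n[of s "smet V t S"] by blast
  define f where "f = (\<lambda>i. SOME v. v \<in> S \<inter> V i)"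
  have f: "f i \<in> S \<inter> V i" if "i \<in> I" for i
  proof -
    have "i \<in> smet V t S" using I that by blast
    then have "\<exists>v. v \<in> S \<inter> V i" unfolding smet_def by blast
    then show ?thesis unfolding f_def by (rule someI_ex)
  qed
  have "f ` I \<in> complete_multipartite_edges V t s"
  proof -
    have "I \<subseteq> {1..t}" using I(1) smet_sub by blast
    moreover have "\<forall>i\<in>I. f i \<in> V i" using f by blast
    ultimately show ?thesis unfolding complete_multipartite_edges_def using I(2) by blast
  qed
  moreover have "f ` I \<subseteq> S" using f by blast
  ultimately show "\<exists>e\<in>complete_multipartite_edges V t s. e \<subseteq> S" by blast
qed

lemma indep_iff:
  "independent_set (complete_multipartite_edges V t s) UNIV S \<longleftrightarrow> card (smet V t S) < s"
  unfolding independent_set_def using edge_sub_iff[of V t s S] by auto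

lemma transversal_iff:
  "transversal H UNIV T \<longleftrightarrow> independent_set H UNIV (UNIV - T)"
  unfolding transversal_def independent_set_def by blast

lemma part_cov: "is_partition_into_sides UNIV V t \<Longrightarrow> \<exists>i\<in>{1..t}. x \<in> V i"
  unfolding is_partition_into_sides_def by (metis UNIV_I UN_iff)

lemma part_dis: "is_partition_into_sides UNIV V t \<Longrightarrow> i \<in> {1..t} \<Longrightarrow> j \<in> {1..t} \<Longrightarrow> i \<noteq> j \<Longrightarrow> V i \<inter> V j = {}"
  unfolding is_partition_into_sides_def by blast

lemma part_ne: "is_partition_into_sides UNIV V t \<Longrightarrow> i \<in> {1..t} \<Longrightarrow> V i \<noteq> {}"
  unfolding is_partition_into_sides_def by blast

lemma cover:
  assumes "is_partition_into_sides UNIV V t"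
  shows "S \<subseteq> (\<Union>i\<in>smet V t S. V i)"
proof
  fix x assume x: "x \<in> S"
  obtain i where "i \<in> {1..t}" "x \<in> V i" using part_cov[OF assms] by blast
  then have "i \<in> smet V t S" "x \<in> V i" using x unfolding smet_def by auto
  then show "x \<in> (\<Union>i\<in>smet V t S. V i)" by blast
qed

lemma smet_Union:
  assumes "is_partition_into_sides UNIV V t" "K \<subseteq> {1..t}"
  shows "smet V t (\<Union>i\<in>K. V i) = K"
proof
  show "smet V t (\<Union>i\<in>K. V i) \<subseteq> K"
  proof
    fix j assume "j \<in> smet V t (\<Union>i\<in>K. V i)"
    then obtain i where "i \<in> K" "V i \<inter> V j \<noteq> {}" "j \<in> {1..t}" unfolding smet_def by blast
    then show "j \<in> K" using part_dis[OF assms(1), of i j] assms(2) by blast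
  qed
  show "K \<subseteq> smet V t (\<Union>i\<in>K. V i)"
  proof
    fix i assume i: "i \<in> K"
    then have "i \<in> {1..t}" using assms(2) by blast
    then have "V i \<noteq> {}" using part_ne[OF assms(1)] by blast
    then show "i \<in> smet V t (\<Union>i\<in>K. V i)" unfolding smet_def using i \<open>i \<in> {1..t}\<close> by blast
  qed
qed

lemma card_Union_sides:
  assumes "is_partition_into_sides (UNIV :: 'a::finite set) V t" "K \<subseteq> {1..t}"
  shows "card (\<Union>i\<in>K. V i) = (\<Sum>i\<in>K. card (V i))"
proof (rule card_UN_disjoint)
  show "finite K" by (rule finite_subset[OF assms(2)]) simp
  show "\<forall>i\<in>K. finite (V i)" by simp
  show "\<forall>i\<in>K. \<forall>j\<in>K. i \<noteq> j \<longrightarrow> V i \<inter> V j = {}"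
    using part_dis[OF assms(1)] assms(2) by blast
qed

lemma compl_Union_sides:
  assumes "is_partition_into_sides UNIV V t" "K \<subseteq> {1..t}"
  shows "UNIV - (\<Union>i\<in>K. V i) = (\<Union>i\<in>{1..t} - K. V i)"
proof -
  have cov: "(\<Union>i\<in>{1..t}. V i) = UNIV" and dis: "\<forall>i\<in>{1..t}. \<forall>j\<in>{1..t}. i \<noteq> j \<longrightarrow> V i \<inter> V j = {}"
    using assms unfolding is_partition_into_sides_def by auto
  show ?thesis
  proof
    show "UNIV - (\<Union>i\<in>K. V i) \<subseteq> (\<Union>i\<in>{1..t} - K. V i)"
    proof
      fix x assume x: "x \<in> UNIV - (\<Union>i\<in>K. V i)"
      obtain i where "i \<in> {1..t}" "x \<in> V i" using part_cov[OF assms(1)] by blast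
      then show "x \<in> (\<Union>i\<in>{1..t} - K. V i)" using x by blast
    qed
    show "(\<Union>i\<in>{1..t} - K. V i) \<subseteq> UNIV - (\<Union>i\<in>K. V i)"
    proof
      fix x assume "x \<in> (\<Union>i\<in>{1..t} - K. V i)"
      then obtain i where i: "i \<in> {1..t}" "i \<notin> K" "x \<in> V i" by blast
      have "x \<notin> V j" if "j \<in> K" for j
      proof -
        have "j \<in> {1..t}" "i \<noteq> j" using that assms(2) i by auto
        then have "V i \<inter> V j = {}" using dis i(1) by blast
        then show ?thesis using i(3) by blast
      qed
      then show "x \<in> UNIV - (\<Union>i\<in>K. V i)" by blast
    qed
  qed
qed

lemma top_sum:
  fixes f :: "nat \<Rightarrow> nat"
  shows "(\<And>i j. 1 \<le> i \<Longrightarrow> i \<le> j \<Longrightarrow> j \<le> t \<Longrightarrow> f i \<le> f j) \<Longrightarrow> K \<subseteq> {1..t} \<Longrightarrow> card K \<le> k \<Longrightarrow> k \<le> t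
    \<Longrightarrow> sum f K \<le> (\<Sum>i=t-k+1..t. f i)"
proof (induction t arbitrary: K k)
  case 0 then show ?case by simp
next
  case (Suc t)
  note mono = Suc.prems(1)
  have mono': "\<And>i j. 1 \<le> i \<Longrightarrow> i \<le> j \<Longrightarrow> j \<le> t \<Longrightarrow> f i \<le> f j" using mono by simp
  show ?case
  proof (cases "k = Suc t")
    case True
    then have "{Suc t - k + 1..Suc t} = {1..Suc t}" by simp
    moreover have "sum f K \<le> sum f {1..Suc t}" by (rule sum_mono2) (use Suc.prems(2) in auto)
    ultimately show ?thesis by simp
  next
    case False
    then have kt: "k \<le> t" using Suc.prems(4) by simp
    show ?thesis
    proof (cases "Suc t \<in> K")
      case True
      define K' where "K' = K - {Suc t}"
      have K': "K' \<subseteq> {1..t}" using Suc.prems(2) unfolding K'_def by auto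
      have fK: "finite K" by (rule finite_subset[OF Suc.prems(2)]) simp
      have "card K > 0" using True fK card_gt_0_iff by blast
      then have k1: "1 \<le> k" using Suc.prems(3) by linarith
      have cK': "card K' \<le> k - 1" using Suc.prems(3) True fK unfolding K'_def by simp
      have IH: "sum f K' \<le> (\<Sum>i=t-(k-1)+1..t. f i)"
        using Suc.IH[OF mono' K' cK'] kt by simp
      have "sum f K = f (Suc t) + sum f K'" unfolding K'_def using True fK by (simp add: sum.remove)
      also have "\<dots> \<le> f (Suc t) + (\<Sum>i=t-(k-1)+1..t. f i)" using IH by simp
      also have "\<dots> = (\<Sum>i=Suc t-k+1..Suc t. f i)"
      proof -
        have e: "t - (k - 1) + 1 = Suc t - k + 1" using k1 kt by simp
        have "Suc t - k + 1 \<le> Suc t" using k1 by simp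
        then show ?thesis unfolding e by (simp add: add.commute)
      qed
      finally show ?thesis .
    next
      case False
      have K: "K \<subseteq> {1..t}"
      proof
        fix x assume x: "x \<in> K"
        then have "x \<in> {1..Suc t}" "x \<noteq> Suc t" using Suc.prems(2) False by auto
        then show "x \<in> {1..t}" by auto
      qed
      have "sum f K \<le> (\<Sum>i=t-k+1..t. f i)" using Suc.IH[OF mono' K Suc.prems(3) kt] .
      also have "\<dots> \<le> (\<Sum>i=Suc t-k+1..Suc t. f i)"
      proof -
        have "(\<Sum>i=t-k+1..t. f i) = (\<Sum>i=t-k+1..t. f i)" ..
        have sh: "(\<Sum>i=Suc t-k+1..Suc t. f i) = (\<Sum>i=t-k+1..t. f (Suc i))"
        proof -
          have e: "Suc t - k + 1 = Suc (t - k + 1)" using kt by simp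
          show ?thesis by (simp only: e sum.shift_bounds_cl_Suc_ivl)
        qed
        have "(\<Sum>i=t-k+1..t. f i) \<le> (\<Sum>i=t-k+1..t. f (Suc i))"
          by (rule sum_mono) (use mono in auto)
        then show ?thesis using sh by simp
      qed
      finally show ?thesis .
    qed
  qed
qed


lemma Tr_facets: "T \<in> Tr H UNIV \<longleftrightarrow> UNIV - T \<in> facets (Ind H UNIV)"
proof
  assume a: "T \<in> Tr H UNIV"
  then have i: "independent_set H UNIV (UNIV - T)" unfolding Tr_def by (simp add: transversal_iff)
  have m: "T' = T" if "independent_set H UNIV (UNIV - T')" "T' \<subseteq> T" for T'
    using a that unfolding Tr_def by (simp add: transversal_iff)
  have "G = UNIV - T" if "independent_set H UNIV G" "UNIV - T \<subseteq> G" for G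
  proof -
    have "UNIV - G \<subseteq> T" using that(2) by blast
    moreover have "independent_set H UNIV (UNIV - (UNIV - G))" using that(1) by (simp add: Diff_Diff_Int)
    ultimately have "UNIV - G = T" using m by blast
    then show ?thesis by blast
  qed
  then show "UNIV - T \<in> facets (Ind H UNIV)" unfolding facets_def Ind_def using i by simp
next
  assume a: "UNIV - T \<in> facets (Ind H UNIV)"
  then have i: "independent_set H UNIV (UNIV - T)" unfolding facets_def Ind_def by simp
  have m: "G = UNIV - T" if "independent_set H UNIV G" "UNIV - T \<subseteq> G" for G
    using a that unfolding facets_def Ind_def by simp
  have "T' = T" if "transversal H UNIV T'" "T' \<subseteq> T" for T'
  proof -
    have "UNIV - T' = UNIV - T" using m that by (simp add: transversal_iff Diff_mono)
    then show ?thesis by blast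
  qed
  then show "T \<in> Tr H UNIV" unfolding Tr_def using i by (simp add: transversal_iff)
qed

locale cmp =
  fixes V :: "nat \<Rightarrow> 'a::finite set" and t s :: nat
  assumes s2: "2 \<le> s" and st: "s \<le> t"
    and sides: "is_partition_into_sides (UNIV :: 'a set) V t"
    and sorted: "\<And>i j. 1 \<le> i \<Longrightarrow> i \<le> j \<Longrightarrow> j \<le> t \<Longrightarrow> card (V i) \<le> card (V j)"
begin

abbreviation "HH \<equiv> complete_multipartite_edges V t s"

lemma facets_eq: "facets (Ind HH UNIV) = {\<Union>i\<in>J. V i | J. J \<subseteq> {1..t} \<and> card J = s - 1}"
proof
  show "facets (Ind HH UNIV) \<subseteq> {\<Union>i\<in>J. V i | J. J \<subseteq> {1..t} \<and> card J = s - 1}"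
  proof
    fix F assume "F \<in> facets (Ind HH UNIV)"
    then have iF: "card (smet V t F) < s" and mx: "\<And>G. card (smet V t G) < s \<Longrightarrow> F \<subseteq> G \<Longrightarrow> G = F"
      unfolding facets_def Ind_def by (auto simp: indep_iff)
    define K where "K = smet V t F"
    have K: "K \<subseteq> {1..t}" "finite K" unfolding K_def using smet_sub smet_fin by auto
    have FG: "F \<subseteq> (\<Union>i\<in>K. V i)" unfolding K_def by (rule cover[OF sides])
    have "card (smet V t (\<Union>i\<in>K. V i)) < s" using smet_Union[OF sides K(1)] iF K_def by simp
    then have Feq: "(\<Union>i\<in>K. V i) = F" using mx FG by blast
    have "card K = s - 1"
    proof (rule ccontr)
      assume "card K \<noteq> s - 1"
      then have lt: "card K < s - 1" using iF K_def by simp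
      have "\<not> {1..t} \<subseteq> K"
      proof
        assume "{1..t} \<subseteq> K"
        then have "card {1..t} \<le> card K" using card_mono K(2) by blast
        then show False using lt st by simp
      qed
      then obtain j where j: "j \<in> {1..t}" "j \<notin> K" by blast
      have K': "insert j K \<subseteq> {1..t}" using j K by blast
      have "card (smet V t (\<Union>i\<in>insert j K. V i)) < s"
        using smet_Union[OF sides K'] j K lt by simp
      moreover have "F \<subseteq> (\<Union>i\<in>insert j K. V i)" using FG by blast
      ultimately have "(\<Union>i\<in>insert j K. V i) = F" using mx by blast
      then have "smet V t F = insert j K" using smet_Union[OF sides K'] by simp
      then show False using j K_def by blast
    qed
    then show "F \<in> {\<Union>i\<in>J. V i | J. J \<subseteq> {1..t} \<and> card J = s - 1}" using Feq K by blast
  qed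
next
  show "{\<Union>i\<in>J. V i | J. J \<subseteq> {1..t} \<and> card J = s - 1} \<subseteq> facets (Ind HH UNIV)"
  proof
    fix F assume "F \<in> {\<Union>i\<in>J. V i | J. J \<subseteq> {1..t} \<and> card J = s - 1}"
    then obtain J where J: "J \<subseteq> {1..t}" "card J = s - 1" "F = (\<Union>i\<in>J. V i)" by blast
    have sF: "smet V t F = J" using smet_Union[OF sides J(1)] J(3) by simp
    have iF: "independent_set HH UNIV F" using sF J(2) s2 by (simp add: indep_iff)
    have "G = F" if "independent_set HH UNIV G" "F \<subseteq> G" for G
    proof -
      have "J \<subseteq> smet V t G" using smet_mono[OF that(2), of V t] sF by simp
      moreover have "card (smet V t G) \<le> card J" using that(1) J(2) s2 by (simp add: indep_iff)
      ultimately have "J = smet V t G" using card_seteq[OF smet_fin] by blast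
      then have "G \<subseteq> F" using cover[OF sides, of G] J(3) by simp
      then show "G = F" using that(2) by blast
    qed
    then show "F \<in> facets (Ind HH UNIV)" unfolding facets_def Ind_def using iF by blast
  qed
qed

lemma Tr_eq: "Tr HH UNIV = {\<Union>i\<in>J. V i | J. J \<subseteq> {1..t} \<and> card J = t - s + 1}"
proof
  show "Tr HH UNIV \<subseteq> {\<Union>i\<in>J. V i | J. J \<subseteq> {1..t} \<and> card J = t - s + 1}"
  proof
    fix T assume "T \<in> Tr HH UNIV"
    then have "UNIV - T \<in> facets (Ind HH UNIV)" by (simp add: Tr_facets)
    then obtain J where J: "J \<subseteq> {1..t}" "card J = s - 1" "UNIV - T = (\<Union>i\<in>J. V i)"
      unfolding facets_eq by blast
    have "T = UNIV - (UNIV - T)" by blast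
    also have "\<dots> = (\<Union>i\<in>{1..t} - J. V i)" unfolding J(3) by (rule compl_Union_sides[OF sides J(1)])
    finally have "T = (\<Union>i\<in>{1..t} - J. V i)" .
    moreover have "card ({1..t} - J) = t - s + 1" using J(1,2) s2 st by (simp add: card_Diff_subset finite_subset)
    ultimately show "T \<in> {\<Union>i\<in>J. V i | J. J \<subseteq> {1..t} \<and> card J = t - s + 1}" by blast
  qed
next
  show "{\<Union>i\<in>J. V i | J. J \<subseteq> {1..t} \<and> card J = t - s + 1} \<subseteq> Tr HH UNIV"
  proof
    fix T assume "T \<in> {\<Union>i\<in>J. V i | J. J \<subseteq> {1..t} \<and> card J = t - s + 1}"
    then obtain J where J: "J \<subseteq> {1..t}" "card J = t - s + 1" "T = (\<Union>i\<in>J. V i)" by blast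
    have "UNIV - T = (\<Union>i\<in>{1..t} - J. V i)" unfolding J(3) by (rule compl_Union_sides[OF sides J(1)])
    moreover have "card ({1..t} - J) = s - 1" using J(1,2) s2 st by (simp add: card_Diff_subset finite_subset)
    ultimately have "UNIV - T \<in> facets (Ind HH UNIV)" unfolding facets_eq using Diff_subset by blast
    then show "T \<in> Tr HH UNIV" by (simp add: Tr_facets)
  qed
qed

definition "alpha0 = (\<Sum>i=t-s+2..t. card (V i))"
definition "tau0 = (\<Sum>i=1..t-s+1. card (V i))"
definition "S0 = (\<Union>i\<in>{t-s+2..t}. V i)"

lemma K0: "{t-s+2..t} \<subseteq> {1..t}" "card {t-s+2..t} = s - 1"
  using s2 st by auto

lemma S0_indep: "independent_set HH UNIV S0"
  unfolding S0_def using smet_Union[OF sides K0(1)] K0(2) s2 by (simp add: indep_iff)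

lemma S0_card: "card S0 = alpha0"
  unfolding S0_def alpha0_def by (rule card_Union_sides[OF sides K0(1)])

lemma indep_le: "independent_set HH UNIV S \<Longrightarrow> card S \<le> alpha0"
proof -
  assume "independent_set HH UNIV S"
  then have c: "card (smet V t S) \<le> s - 1" by (simp add: indep_iff)
  have "card S \<le> card (\<Union>i\<in>smet V t S. V i)" by (rule card_mono[OF finite cover[OF sides]])
  also have "\<dots> = (\<Sum>i\<in>smet V t S. card (V i))" by (rule card_Union_sides[OF sides smet_sub])
  also have "\<dots> \<le> (\<Sum>i=t-(s-1)+1..t. card (V i))"
    by (rule top_sum[OF sorted smet_sub c]) (use st in auto)
  also have "t - (s - 1) + 1 = t - s + 2" using s2 st by simp
  finally show ?thesis unfolding alpha0_def .
qed

lemma card_univ: "card (UNIV :: 'a set) = tau0 + alpha0"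
proof -
  have "UNIV = (\<Union>i\<in>{1..t}. V i)" using part_cov[OF sides] by blast
  then have "card (UNIV :: 'a set) = (\<Sum>i\<in>{1..t}. card (V i))"
    using card_Union_sides[OF sides, of "{1..t}"] by simp
  also have "{1..t} = {1..t-s+1} \<union> {t-s+2..t}" using s2 st by auto
  also have "(\<Sum>i\<in>{1..t-s+1} \<union> {t-s+2..t}. card (V i)) = tau0 + alpha0"
    unfolding tau0_def alpha0_def by (rule sum.union_disjoint) auto
  finally show ?thesis .
qed

lemma indep_number_eq: "indep_number HH UNIV = alpha0"
  unfolding indep_number_def
proof (rule Max_eqI)
  show "finite {card S |S. independent_set HH UNIV S}"
  proof (rule finite_subset)
    show "{card S |S. independent_set HH UNIV S} \<subseteq> {..card (UNIV :: 'a set)}"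
      using card_mono[OF finite_UNIV] by auto
  qed simp
  show "\<And>y. y \<in> {card S |S. independent_set HH UNIV S} \<Longrightarrow> y \<le> alpha0" using indep_le by blast
  show "alpha0 \<in> {card S |S. independent_set HH UNIV S}" using S0_indep S0_card by (intro CollectI exI[of _ S0]) simp
qed

lemma trans_ge: "transversal HH UNIV T \<Longrightarrow> tau0 \<le> card T"
proof -
  assume "transversal HH UNIV T"
  then have "card (UNIV - T) \<le> alpha0" using indep_le by (simp add: transversal_iff)
  moreover have "card (UNIV - T) = card (UNIV :: 'a set) - card T" by (simp add: card_Diff_subset)
  ultimately show ?thesis using card_univ by simp
qed

definition "T0 = UNIV - S0"

lemma T0: "transversal HH UNIV T0" "card T0 = tau0"
proof -
  show "transversal HH UNIV T0" unfolding T0_def transversal_iff using S0_indep by (simp add: Diff_Diff_Int)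
  show "card T0 = tau0" unfolding T0_def using card_univ S0_card by (simp add: card_Diff_subset)
qed

lemma transversal_number_eq: "transversal_number HH UNIV = tau0"
  unfolding transversal_number_def
proof (rule Min_eqI)
  show "finite {card T |T. transversal HH UNIV T}"
  proof (rule finite_subset)
    show "{card T |T. transversal HH UNIV T} \<subseteq> {..card (UNIV :: 'a set)}"
      using card_mono[OF finite_UNIV] by auto
  qed simp
  show "\<And>y. y \<in> {card T |T. transversal HH UNIV T} \<Longrightarrow> tau0 \<le> y" using trans_ge by blast
  show "tau0 \<in> {card T |T. transversal HH UNIV T}" using T0 by (intro CollectI exI[of _ T0]) simp
qed

lemma dim_eq: "complex_dim (Ind HH UNIV) + 1 = int alpha0"
proof -
  have "card ` Ind HH UNIV = {card S |S. independent_set HH UNIV S}" unfolding Ind_def by blast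
  then have "Max (card ` Ind HH UNIV) = alpha0" using indep_number_eq unfolding indep_number_def by simp
  then show ?thesis unfolding complex_dim_def by simp
qed

end


context cmp begin

lemma T0_hits: "\<forall>e\<in>HH. T0 \<inter> e \<noteq> {}"
  using T0(1) unfolding transversal_def by blast

lemma S0_list: "\<exists>as. distinct as \<and> set as = S0 \<and> length as = alpha0"
  using list_of_set[of S0] S0_card by auto

lemma up_chain: "\<exists>as. prime_chain (\<lambda>i. VI (T0 \<union> set (take i as)) :: ('a, 'k::field) mpoly set) alpha0"
proof -
  obtain as where as: "distinct as" "set as = S0" "length as = alpha0" using S0_list by blast
  have "set as \<inter> T0 = {}" using as(2) unfolding T0_def by blast
  then show ?thesis using var_chain[OF as(1), of T0] as(3) by metis
qed

lemma down_chain: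
  fixes Q :: "('a, 'k::field) mpoly set"
  assumes pr: "is_prime_ideal Q" and sub: "edge_ideal HH \<subseteq> Q"
  shows "\<exists>a R. tau0 \<le> a \<and> prime_chain R a \<and> R a \<subseteq> Q"
proof -
  define A where "A = {v. Var v \<in> Q}"
  have tr: "transversal HH UNIV A" unfolding transversal_def A_def
    using prime_vars_transversal(1)[OF pr sub] by blast
  have VA: "VI A \<subseteq> Q" unfolding A_def using prime_vars_transversal(2)[OF pr sub] .
  obtain as where as: "distinct as" "set as = A" "length as = card A" using list_of_set[of A] by auto
  have pc: "prime_chain (\<lambda>i. VI ({} \<union> set (take i as)) :: ('a, 'k) mpoly set) (card A)"
    using var_chain[OF as(1), of "{}"] as(3) by simp
  have "VI ({} \<union> set (take (card A) as)) = (VI A :: ('a, 'k) mpoly set)" using as by simp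
  then show ?thesis using pc VA trans_ge[OF tr] by (intro exI[of _ "card A"] exI[of _ "\<lambda>i. VI ({} \<union> set (take i as)) :: ('a, 'k) mpoly set"]) auto
qed

lemma krull_eq: "krull_dim_quot (edge_ideal HH :: ('a, 'k::field) mpoly set) = enat alpha0"
  unfolding krull_dim_quot_def
proof (rule antisym)
  show "Sup {enat n |n P. prime_chain P n \<and> (edge_ideal HH :: ('a, 'k) mpoly set) \<subseteq> P 0} \<le> enat alpha0"
  proof (rule Sup_least)
    fix x assume "x \<in> {enat n |n P. prime_chain P n \<and> (edge_ideal HH :: ('a, 'k) mpoly set) \<subseteq> P 0}"
    then obtain k P where kP: "x = enat k" "prime_chain P k" "(edge_ideal HH :: ('a, 'k) mpoly set) \<subseteq> P 0" by blast
    have "is_prime_ideal (P 0)" using kP(2) unfolding prime_chain_def by simp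
    then obtain a R where aR: "tau0 \<le> a" "prime_chain R a" "R a \<subseteq> P 0" using down_chain kP(3) by blast
    have "prime_chain (\<lambda>i. if i < a then R i else P (i - a)) (a + k)" by (rule chain_concat[OF aR(2) kP(2) aR(3)])
    then have "a + k \<le> card (UNIV :: 'a set)" by (rule chain_bound)
    then have "k \<le> alpha0" using aR(1) card_univ by simp
    then show "x \<le> enat alpha0" using kP(1) by simp
  qed
next
  obtain as where pc: "prime_chain (\<lambda>i. VI (T0 \<union> set (take i as)) :: ('a, 'k) mpoly set) alpha0" using up_chain by blast
  have "(edge_ideal HH :: ('a, 'k) mpoly set) \<subseteq> VI (T0 \<union> set (take 0 as))"
    using edge_ideal_sub_VI[OF T0_hits] by simp
  then have "enat alpha0 \<in> {enat n |n P. prime_chain P n \<and> (edge_ideal HH :: ('a, 'k) mpoly set) \<subseteq> P 0}"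
    using pc by blast
  then show "enat alpha0 \<le> Sup {enat n |n P. prime_chain P n \<and> (edge_ideal HH :: ('a, 'k) mpoly set) \<subseteq> P 0}"
    by (rule Sup_upper)
qed

lemma height_eq: "ideal_height (edge_ideal HH :: ('a, 'k::field) mpoly set) = enat tau0"
  unfolding ideal_height_def
proof (rule antisym)
  define Q0 where "Q0 = (VI T0 :: ('a, 'k) mpoly set)"
  have Q0: "is_prime_ideal Q0" "(edge_ideal HH :: ('a, 'k) mpoly set) \<subseteq> Q0"
    unfolding Q0_def using VI_prime edge_ideal_sub_VI[OF T0_hits] by auto
  have "prime_height Q0 \<le> enat tau0"
    unfolding prime_height_def
  proof (rule Sup_least)
    fix x assume "x \<in> {enat n |n P. prime_chain P n \<and> P n = Q0}"
    then obtain k P where kP: "x = enat k" "prime_chain P k" "P k = Q0" by blast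
    obtain as where pc: "prime_chain (\<lambda>i. VI (T0 \<union> set (take i as)) :: ('a, 'k) mpoly set) alpha0" using up_chain by blast
    have "P k \<subseteq> VI (T0 \<union> set (take 0 as))" using kP(3) unfolding Q0_def by simp
    then have "prime_chain (\<lambda>i. if i < k then P i else VI (T0 \<union> set (take (i - k) as))) (k + alpha0)"
      by (rule chain_concat[OF kP(2) pc])
    then have "k + alpha0 \<le> card (UNIV :: 'a set)" by (rule chain_bound)
    then have "k \<le> tau0" using card_univ by simp
    then show "x \<le> enat tau0" using kP(1) by simp
  qed
  moreover have "prime_height Q0 \<in> {prime_height Q |Q. is_prime_ideal Q \<and> (edge_ideal HH :: ('a, 'k) mpoly set) \<subseteq> Q}"
    unfolding mem_Collect_eq using Q0 by (intro exI[of _ Q0]) simp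
  then have "Inf {prime_height Q |Q. is_prime_ideal Q \<and> (edge_ideal HH :: ('a, 'k) mpoly set) \<subseteq> Q} \<le> prime_height Q0"
    by (rule Inf_lower)
  ultimately show "Inf {prime_height Q |Q. is_prime_ideal Q \<and> (edge_ideal HH :: ('a, 'k) mpoly set) \<subseteq> Q} \<le> enat tau0"
    by (rule order_trans[rotated])
next
  show "enat tau0 \<le> Inf {prime_height Q |Q. is_prime_ideal Q \<and> (edge_ideal HH :: ('a, 'k) mpoly set) \<subseteq> Q}"
  proof (rule Inf_greatest)
    fix x assume "x \<in> {prime_height Q |Q. is_prime_ideal Q \<and> (edge_ideal HH :: ('a, 'k) mpoly set) \<subseteq> Q}"
    then obtain Q where Q: "x = prime_height Q" "is_prime_ideal Q" "(edge_ideal HH :: ('a, 'k) mpoly set) \<subseteq> Q" by blast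
    obtain a R where aR: "tau0 \<le> a" "prime_chain R a" "R a \<subseteq> Q" using down_chain[OF Q(2,3)] by blast
    have pQ: "prime_chain (\<lambda>_. Q) 0" using Q(2) unfolding prime_chain_def by simp
    have "prime_chain (\<lambda>i. if i < a then R i else Q) (a + 0)" using chain_concat[OF aR(2) pQ] aR(3) by simp
    moreover have "(\<lambda>i. if i < a then R i else Q) a = Q" by simp
    ultimately have "enat a \<in> {enat n |n P. prime_chain P n \<and> P n = Q}"
      unfolding mem_Collect_eq by (intro exI[of _ a] exI[of _ "\<lambda>i. if i < a then R i else Q"]) simp
    then have ah: "enat a \<le> prime_height Q" unfolding prime_height_def by (rule Sup_upper)
    have "enat tau0 \<le> enat a" using aR(1) by simp
    from order_trans[OF this ah] show "enat tau0 \<le> x" using Q(1) by simp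
  qed
qed

end


theorem proposition2p1:
  fixes V :: "nat \<Rightarrow> 'a::finite set" and t s :: nat
  defines "H \<equiv> complete_multipartite_edges V t s"
  assumes "2 \<le> s" and "s \<le> t"
    and sides: "is_partition_into_sides (UNIV :: 'a set) V t"
    and sorted: "\<And>i j. 1 \<le> i \<Longrightarrow> i \<le> j \<Longrightarrow> j \<le> t \<Longrightarrow> card (V i) \<le> card (V j)"
  shows
    "facets (Ind H UNIV) = {\<Union>i\<in>J. V i | J. J \<subseteq> {1..t} \<and> card J = s - 1}
     \<and> Tr H UNIV = {\<Union>i\<in>J. V i | J. J \<subseteq> {1..t} \<and> card J = t - s + 1}
     \<and> indep_number H UNIV = (\<Sum>i=t-s+2..t. card (V i))
     \<and> transversal_number H UNIV = (\<Sum>i=1..t-s+1. card (V i))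
     \<and> krull_dim_quot (edge_ideal H :: ('a, 'k::field) mpoly set) = enat (nat (complex_dim (Ind H UNIV) + 1))
     \<and> complex_dim (Ind H UNIV) + 1 = int (\<Sum>i=t-s+2..t. card (V i))
     \<and> ideal_height (edge_ideal H :: ('a, 'k) mpoly set) = enat (\<Sum>i=1..t-s+1. card (V i))
     \<and> (\<forall>m\<ge>1. (\<forall>i\<in>{1..t}. card (V i) = m) \<longrightarrow>
          ideal_height (edge_ideal H :: ('a, 'k) mpoly set) = enat (m * (t - s + 1)) \<and>
          krull_dim_quot (edge_ideal H :: ('a, 'k) mpoly set) = enat (m * (s - 1)))"
  proof -
  interpret c: cmp V t s
    by unfold_locales (use \<open>2 \<le> s\<close> \<open>s \<le> t\<close> sides sorted in auto)
  have e1: "indep_number H UNIV = (\<Sum>i=t-s+2..t. card (V i))"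
    unfolding H_def c.indep_number_eq c.alpha0_def ..
  have e2: "transversal_number H UNIV = (\<Sum>i=1..t-s+1. card (V i))"
    unfolding H_def c.transversal_number_eq c.tau0_def ..
  have e3: "complex_dim (Ind H UNIV) + 1 = int (\<Sum>i=t-s+2..t. card (V i))"
    unfolding H_def c.dim_eq c.alpha0_def ..
  have kr: "krull_dim_quot (edge_ideal H :: ('a, 'k::field) mpoly set) = enat c.alpha0"
    unfolding H_def by (rule c.krull_eq)
  have ht: "ideal_height (edge_ideal H :: ('a, 'k::field) mpoly set) = enat c.tau0"
    unfolding H_def by (rule c.height_eq)
  have e5: "krull_dim_quot (edge_ideal H :: ('a, 'k::field) mpoly set) = enat (nat (complex_dim (Ind H UNIV) + 1))"
  proof -
    have d: "complex_dim (Ind H UNIV) + 1 = int c.alpha0" unfolding H_def by (rule c.dim_eq)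
    show ?thesis unfolding kr d by simp
  qed
  have e8: "\<forall>m\<ge>1. (\<forall>i\<in>{1..t}. card (V i) = m) \<longrightarrow>
          ideal_height (edge_ideal H :: ('a, 'k) mpoly set) = enat (m * (t - s + 1)) \<and>
          krull_dim_quot (edge_ideal H :: ('a, 'k) mpoly set) = enat (m * (s - 1))"
  proof (intro allI impI)
    fix m :: nat assume m: "1 \<le> m" "\<forall>i\<in>{1..t}. card (V i) = m"
    have "c.tau0 = (\<Sum>i=1..t-s+1. m)" unfolding c.tau0_def using m(2) \<open>2 \<le> s\<close> \<open>s \<le> t\<close> by (intro sum.cong) auto
    then have t: "c.tau0 = m * (t - s + 1)" by simp
    have "c.alpha0 = (\<Sum>i=t-s+2..t. m)" unfolding c.alpha0_def using m(2) \<open>2 \<le> s\<close> \<open>s \<le> t\<close> by (intro sum.cong) auto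
    moreover have "card {t-s+2..t} = s - 1" using \<open>2 \<le> s\<close> \<open>s \<le> t\<close> by simp
    ultimately have a: "c.alpha0 = m * (s - 1)" by simp
    show "ideal_height (edge_ideal H :: ('a, 'k) mpoly set) = enat (m * (t - s + 1)) \<and>
          krull_dim_quot (edge_ideal H :: ('a, 'k) mpoly set) = enat (m * (s - 1))"
      using ht kr t a by simp
  qed
  show ?thesis
    using c.facets_eq c.Tr_eq e1 e2 e5 e3 ht e8 unfolding H_def c.tau0_def by simp
qed

end
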